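(* Let $a\ge 6$ and $n\ge 0$ be integers, and let $R_n$, $S_n$, $c_{l,j,n}$, $P_{0,n}$ and $P_{l,n}$ be as defined in the context. (1) For every $z\in\mathbb{C}$ with $|z|>1$, $$S_n(z)=P_{0,n}(z)+\sum_{l=1}^{a}\frac{l(l+1)}{2}P_{l,n}(z)\,\mathrm{Li}_{l+2}(1/z),$$ and $P_{1,n}(1)=0$. (2) If moreover $a$ is even, then $P_{l,n}(1)=0$ for every $n\ge0$ and every even integer $l\in\{2,\dots,a\}$. Consequently $$S_n(1)=P_{0,n}(1)+\sum_{j=2}^{a/2} j(2j-1)\,P_{2j-1,n}(1)\,\zeta(2j+1).$$
   Context: Fix an integer $a\ge 6$. For a complex number $x$ and an integer $m\ge0$, $(x)_m=x(x+1)\cdots(x+m-1)$ is the Pochhammer symbol. For an integer $n\ge0$, define the rational function $$R_n(t)=n!^{a-6}\left(t+\frac n2\right)\frac{(t-n)_n^3\,(t+n+1)_n^3}{(t)_{n+1}^a},$$ and, for $z\in\mathbb{C}$ with $|z|\ge1$, $$S_n(z)=\sum_{k=1}^{\infty}\frac12 R_n''(k)\,z^{-k}.$$ Let $D_\lambda=\frac1{\lambda!}\left(\frac{d}{dt}\right)^\lambda$. For $l\in\{1,\dots,a\}$ and $j\in\{0,\dots,n\}$ put $c_{l,j,n}=D_{a-l}\big(R_n(t)(t+j)^a\big)\big|_{t=-j}$, so that $R_n(t)=\sum_{l=1}^a\sum_{j=0}^n c_{l,j,n}(t+j)^{-l}$. Define the polynomials $$P_{0,n}(z)=-\sum_{l=1}^a\sum_{j=1}^n\sum_{k=1}^{j}\frac{l(l+1)\,c_{l,j,n}}{2k^{l+2}}z^{j-k},\qquad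 P_{l,n}(z)=\sum_{j=0}^n c_{l,j,n}z^j\quad(1\le l\le a).$$ $\mathrm{Li}_s(x)=\sum_{k\ge1}x^k/k^s$ is the polylogarithm and $\zeta$ the Riemann zeta function. *)

theory Defs
  imports "HOL-Analysis.Analysis"
begin

text \<open>The rational function R_n(t), as a complex function (the value at the poles
  t = 0,-1,...,-n is irrelevant for everything below).\<close>
definition R :: "nat \<Rightarrow> nat \<Rightarrow> complex \<Rightarrow> complex" where
  "R a n t = (fact n) ^ (a - 6) * (t + of_nat n / 2)
     * pochhammer (t - of_nat n) n ^ 3 * pochhammer (t + of_nat n + 1) n ^ 3
     / pochhammer t (n + 1) ^ a"

text \<open>The function R_n(t) (t+j)^a with its removable singularity at t = -j removed:
  since (t)_(n+1) = prod_(i=0..n) (t+i), the factor (t+j)^a cancels.\<close>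
definition Rreg :: "nat \<Rightarrow> nat \<Rightarrow> nat \<Rightarrow> complex \<Rightarrow> complex" where
  "Rreg a n j t = (fact n) ^ (a - 6) * (t + of_nat n / 2)
     * pochhammer (t - of_nat n) n ^ 3 * pochhammer (t + of_nat n + 1) n ^ 3
     / (\<Prod>i\<in>{0..n} - {j}. (t + of_nat i) ^ a)"

text \<open>c_{l,j,n} = D_{a-l}(R_n(t)(t+j)^a) at t = -j.\<close>
definition cc :: "nat \<Rightarrow> nat \<Rightarrow> nat \<Rightarrow> nat \<Rightarrow> complex" where
  "cc a n l j = (deriv ^^ (a - l)) (Rreg a n j) (- of_nat j) / fact (a - l)"

definition S :: "nat \<Rightarrow> nat \<Rightarrow> complex \<Rightarrow> complex" where
  "S a n z = (\<Sum>k. (1/2) * (deriv ^^ 2) (R a n) (of_nat (Suc k)) * z powi (- int (Suc k)))"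

definition P0 :: "nat \<Rightarrow> nat \<Rightarrow> complex \<Rightarrow> complex" where
  "P0 a n z = - (\<Sum>l=1..a. \<Sum>j=1..n. \<Sum>k=1..j.
       of_nat (l * (l + 1)) * cc a n l j / (2 * of_nat k ^ (l + 2)) * z ^ (j - k))"

definition P :: "nat \<Rightarrow> nat \<Rightarrow> nat \<Rightarrow> complex \<Rightarrow> complex" where
  "P a n l z = (\<Sum>j=0..n. cc a n l j * z ^ j)"

definition polylog :: "nat \<Rightarrow> complex \<Rightarrow> complex" where
  "polylog s x = (\<Sum>k. x ^ Suc k / of_nat (Suc k) ^ s)"

text \<open>Riemann zeta at integers s >= 2 (only used there): zeta s = sum_(k>=1) 1/k^s.\<close>
definition zeta_nat :: "nat \<Rightarrow> complex" where
  "zeta_nat s = (\<Sum>k. 1 / of_nat (Suc k) ^ s)"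

end

theory Submission
  imports Defs "HOL-Complex_Analysis.Complex_Analysis"
begin

definition Pol :: "nat \<Rightarrow> complex set" where
  "Pol n = (\<lambda>i. - of_nat i) ` {0..n}"

lemma finite_Pol[simp]: "finite (Pol n)" by (simp add: Pol_def)

lemma R_Rreg:
  assumes "t \<notin> Pol n" "j \<le> n"
  shows "R a n t = Rreg a n j t / (t + of_nat j) ^ a"
proof -
  have nz: "t + of_nat i \<noteq> 0" if "i \<le> n" for i
  proof
    assume "t + of_nat i = 0"
    then have "t = - of_nat i" by (simp add: eq_neg_iff_add_eq_0)
    with that assms(1) show False unfolding Pol_def by auto
  qed
  have "pochhammer t (n+1) ^ a = (\<Prod>i\<in>{0..n}. (t + of_nat i) ^ a)"
    by (simp add: pochhammer_Suc_prod prod_power_distrib)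
  also have "\<dots> = (t + of_nat j) ^ a * (\<Prod>i\<in>{0..n} - {j}. (t + of_nat i) ^ a)"
    using assms(2) by (subst prod.remove[of _ j]) auto
  finally have e: "pochhammer t (n+1) ^ a = (t + of_nat j) ^ a * (\<Prod>i\<in>{0..n} - {j}. (t + of_nat i) ^ a)" .
  have "(\<Prod>i\<in>{0..n} - {j}. (t + of_nat i) ^ a) \<noteq> 0"
    using nz by (auto simp: prod_zero_iff)
  moreover have "(t + of_nat j) ^ a \<noteq> 0" using nz assms by auto
  ultimately show ?thesis
    unfolding R_def Rreg_def e by (simp add: field_simps)
qed

lemma Rreg_holo:
  assumes "j \<le> n"
  shows "Rreg a n j holomorphic_on ball (- of_nat j) 1"
proof -
  have nz: "t + of_nat i \<noteq> 0" if "t \<in> ball (- of_nat j) 1" "i \<in> {0..n} - {j}" for t :: complex and i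
  proof
    assume "t + of_nat i = 0"
    then have "t = - of_nat i" by (simp add: eq_neg_iff_add_eq_0)
    with that have "cmod (of_int (int i - int j)) < 1" by (simp add: dist_norm norm_minus_commute)
    then have "\<bar>int i - int j\<bar> < 1" by (simp only: norm_of_int of_int_abs[symmetric] of_int_less_1_iff)
    with that show False by auto
  qed
  show ?thesis
    unfolding Rreg_def pochhammer_prod
    by (intro holomorphic_intros) (use nz in \<open>auto simp: prod_zero_iff\<close>)
qed

lemma taylor_tail:
  fixes f :: "complex \<Rightarrow> complex"
  assumes holf: "f holomorphic_on ball w r" and r: "r > 0"
  obtains g where "isCont g w"
    "\<And>t. t \<in> ball w r \<Longrightarrow> t \<noteq> w \<Longrightarrow>
        f t = (\<Sum>k<m. (deriv ^^ k) f w / fact k * (t - w) ^ k) + (t - w) ^ m * g t"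
proof -
  define c where "c k = (deriv ^^ k) f w / fact k" for k
  define g where "g t = (\<Sum>k. c (k + m) * (t - w) ^ k)" for t
  have sm: "(\<lambda>k. c (k+m) * (t - w) ^ k) sums ((f t - (\<Sum>k<m. c k * (t - w) ^ k)) / (t - w) ^ m)"
    if "t \<in> ball w r" "t \<noteq> w" for t
  proof -
    have "(\<lambda>k. c k * (t - w) ^ k) sums f t"
      using holomorphic_power_series[OF holf that(1)] by (simp add: c_def)
    from sums_split_initial_segment[OF this, of m]
    have "(\<lambda>k. c (k+m) * (t - w) ^ (k+m)) sums (f t - (\<Sum>k<m. c k * (t - w) ^ k))" .
    from sums_divide[OF this, of "(t-w)^m"] show ?thesis
      using that by (simp add: power_add field_simps)
  qed
  have "isCont g w"
  proof -
    have K: "w + of_real (r/2) \<in> ball w r" "w + of_real (r/2) \<noteq> w" using r by (auto simp: dist_norm)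
    have s: "summable (\<lambda>k. c (k+m) * (of_real (r/2)) ^ k)"
      using sums_summable[OF sm[OF K]] by simp
    have "isCont (\<lambda>t. \<Sum>k. c (k + m) * (t - w) ^ k) w"
      by (rule isCont_powser'[OF _ s]) (use r in auto)
    moreover have "g = (\<lambda>t. \<Sum>k. c (k + m) * (t - w) ^ k)" by (simp add: fun_eq_iff g_def)
    ultimately show ?thesis by simp
  qed
  moreover have "f t = (\<Sum>k<m. (deriv ^^ k) f w / fact k * (t - w) ^ k) + (t - w) ^ m * g t"
    if "t \<in> ball w r" "t \<noteq> w" for t
    using sums_unique[OF sm[OF that]] that by (simp add: g_def c_def field_simps)
  ultimately show ?thesis using that by blast
qed

lemma poch_upper: "norm (pochhammer (x::complex) m) \<le> (norm x + m) ^ m"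
proof -
  have "norm (pochhammer x m) = (\<Prod>i\<in>{0..<m}. norm (x + of_nat i))"
    by (simp add: pochhammer_prod prod_norm)
  also have "\<dots> \<le> (\<Prod>i\<in>{0..<m}. norm x + m)"
  proof (rule prod_mono)
    fix i assume "i \<in> {0..<m}"
    then show "0 \<le> norm (x + of_nat i) \<and> norm (x + of_nat i) \<le> norm x + m"
      using norm_triangle_ineq[of x "of_nat i"] by auto
  qed
  finally show ?thesis by simp
qed

lemma poch_lower:
  assumes "norm (x::complex) \<ge> m"
  shows "(norm x - m) ^ m \<le> norm (pochhammer x m)"
proof -
  have "(norm x - m) ^ m = (\<Prod>i\<in>{0..<m}. norm x - m)" by simp
  also have "\<dots> \<le> (\<Prod>i\<in>{0..<m}. norm (x + of_nat i))"
  proof (rule prod_mono)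
    fix i assume "i \<in> {0..<m}"
    then show "0 \<le> norm x - m \<and> norm x - m \<le> norm (x + of_nat i)"
      using norm_triangle_ineq2[of x "- of_nat i"] assms by auto
  qed
  also have "\<dots> = norm (pochhammer x m)"
    by (simp add: pochhammer_prod prod_norm)
  finally show ?thesis .
qed

lemma R_bound:
  assumes a: "a \<ge> 6" and t: "norm t \<ge> 2 * real n + 2"
  shows "norm (R a n t) \<le> (fact n ^ (a - 6) * 2 ^ (6*n+1) * 2 ^ ((n+1)*a)) / norm t ^ 5"
proof -
  define X where "X = norm t"
  have X1: "X \<ge> 1" "X > 0" using t by (auto simp: X_def)
  have b1: "norm (t + of_nat n / 2) \<le> 2 * X"
    using norm_triangle_ineq[of t "of_nat n / 2"] t by (simp add: X_def norm_divide)
  have b2: "norm (pochhammer (t - of_nat n) n) \<le> (2 * X) ^ n"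
  proof -
    have "norm (t - of_nat n) + n \<le> 2 * X"
      using norm_triangle_ineq4[of t "of_nat n"] t by (simp add: X_def)
    then show ?thesis using poch_upper[of "t - of_nat n" n]
      by (meson norm_ge_zero order_trans power_mono add_nonneg_nonneg of_nat_0_le_iff)
  qed
  have b3: "norm (pochhammer (t + of_nat n + 1) n) \<le> (2 * X) ^ n"
  proof -
    have e: "norm (of_nat n + 1 :: complex) = real n + 1"
      using norm_of_nat[of "Suc n", where 'a=complex] by (simp add: add.commute)
    have "norm (t + of_nat n + 1) \<le> X + n + 1"
      using norm_triangle_ineq[of t "of_nat n + 1"] e by (simp add: X_def add.assoc)
    then have "norm (t + of_nat n + 1) + n \<le> 2 * X"
      using t by (simp add: X_def)
    then show ?thesis using poch_upper[of "t + of_nat n + 1" n]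
      by (meson norm_ge_zero order_trans power_mono add_nonneg_nonneg of_nat_0_le_iff)
  qed
  have b4: "(X / 2) ^ (n+1) \<le> norm (pochhammer t (n+1))"
  proof -
    have "X / 2 \<le> X - real (n+1)" using t by (simp add: X_def)
    then have "(X/2) ^ (n+1) \<le> (X - real (n+1)) ^ (n+1)"
      using X1 by (intro power_mono) auto
    also have "\<dots> \<le> norm (pochhammer t (n+1))"
      using poch_lower[of "n+1" t] t by (simp add: X_def)
    finally show ?thesis .
  qed
  define K where "K = (fact n ^ (a - 6) :: real)"
  have K0: "K \<ge> 0" by (simp add: K_def)
  have num: "norm (fact n ^ (a - 6) * (t + of_nat n / 2) * pochhammer (t - of_nat n) n ^ 3
       * pochhammer (t + of_nat n + 1) n ^ 3) \<le> K * (2 * X) ^ (6*n+1)"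
  proof -
    have "norm (fact n ^ (a - 6) * (t + of_nat n / 2) * pochhammer (t - of_nat n) n ^ 3
       * pochhammer (t + of_nat n + 1) n ^ 3) = K * norm (t + of_nat n / 2) *
        norm (pochhammer (t - of_nat n) n) ^ 3 * norm (pochhammer (t + of_nat n + 1) n) ^ 3"
      by (simp add: norm_mult norm_power K_def norm_fact)
    also have "\<dots> \<le> K * (2 * X) * ((2 * X) ^ n) ^ 3 * ((2 * X) ^ n) ^ 3"
      using b1 b2 b3 K0 X1 by (intro mult_mono power_mono) auto
    also have "\<dots> = K * (2 * X) ^ (6*n+1)"
      by (simp add: power_mult[symmetric] power_add[symmetric] algebra_simps)
    finally show ?thesis .
  qed
  have den: "(X / 2) ^ ((n+1)*a) \<le> norm (pochhammer t (n + 1) ^ a)"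
  proof -
    have "(X / 2) ^ ((n+1)*a) = ((X/2) ^ (n+1)) ^ a" by (simp only: power_mult)
    also have "\<dots> \<le> norm (pochhammer t (n + 1)) ^ a"
      by (rule power_mono[OF b4]) (use X1 in simp)
    finally show ?thesis by (simp add: norm_power)
  qed
  have denpos: "(X / 2) ^ ((n+1)*a) > 0" using X1 by simp
  have "norm (R a n t) \<le> K * (2 * X) ^ (6*n+1) / (X / 2) ^ ((n+1)*a)"
    unfolding R_def norm_divide
    by (rule frac_le[OF _ num denpos den]) (use K0 X1 in simp)
  also have "\<dots> = K * 2 ^ (6*n+1) * 2 ^ ((n+1)*a) * (X ^ (6*n+1) / X ^ ((n+1)*a))"
    by (simp add: power_mult_distrib power_divide field_simps)
  also have "X ^ (6*n+1) / X ^ ((n+1)*a) \<le> 1 / X ^ 5"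
  proof -
    have "(n+1)*a \<ge> (n+1)*6" using a by (intro mult_le_mono2)
    then have "X ^ (6*n+1+5) \<le> X ^ ((n+1)*a)"
      using X1 by (intro power_increasing) auto
    then have "X ^ (6*n+1) * X ^ 5 \<le> X ^ ((n+1)*a)" by (simp only: power_add)
    then show ?thesis using X1 by (simp add: divide_simps)
  qed
  finally show ?thesis
    using K0 by (simp add: X_def K_def mult_left_mono divide_simps split: if_splits)
qed

definition F :: "nat \<Rightarrow> nat \<Rightarrow> complex \<Rightarrow> complex" where
  "F a n t = (\<Sum>l=1..a. \<Sum>j=0..n. cc a n l j / (t + of_nat j) ^ l)"

lemma notin_Pol_ball:
  assumes "t \<in> ball (- of_nat j) 1" "t \<noteq> - of_nat j"
  shows "t \<notin> Pol n"
proof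
  assume "t \<in> Pol n"
  then obtain i where i: "t = - of_nat i" unfolding Pol_def by auto
  with assms have "cmod (of_int (int i - int j)) < 1" by (simp add: dist_norm norm_minus_commute)
  then have "\<bar>int i - int j\<bar> < 1" by (simp only: norm_of_int of_int_abs[symmetric] of_int_less_1_iff)
  then have "i = j" by auto
  with i assms show False by simp
qed

lemma notin_Pol_big:
  assumes "norm t > real n"
  shows "t \<notin> Pol n"
  using assms unfolding Pol_def by auto

lemma notin_Pol_Re:
  assumes "Re t > 0"
  shows "t \<notin> Pol n"
  using assms unfolding Pol_def by auto

lemma Pol_nz: "t \<notin> Pol n \<Longrightarrow> j \<le> n \<Longrightarrow> t + of_nat j \<noteq> 0"
proof
  assume "t \<notin> Pol n" "j \<le> n" "t + of_nat j = 0"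
  then have "t = - of_nat j" by (simp add: eq_neg_iff_add_eq_0)
  with \<open>j \<le> n\<close> \<open>t \<notin> Pol n\<close> show False unfolding Pol_def by auto
qed

lemma principal_sum:
  fixes x :: complex
  assumes "x \<noteq> 0"
  shows "(\<Sum>k<a. c k * x ^ k) / x ^ a = (\<Sum>l=1..a. c (a - l) / x ^ l)"
proof -
  have "(\<Sum>k<a. c k * x ^ k) / x ^ a = (\<Sum>k<a. c k / x ^ (a - k))"
    unfolding sum_divide_distrib
  proof (rule sum.cong[OF refl])
    fix k assume "k \<in> {..<a}"
    then have "x ^ a = x ^ k * x ^ (a - k)" by (simp add: power_add[symmetric])
    then show "c k * x ^ k / x ^ a = c k / x ^ (a - k)" using assms by simp
  qed
  also have "\<dots> = (\<Sum>l=1..a. c (a - l) / x ^ l)"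
    by (rule sum.reindex_bij_witness[where i="\<lambda>l. a - l" and j="\<lambda>k. a - k"]) auto
  finally show ?thesis .
qed

lemma near_pole:
  assumes j: "j \<le> n"
  shows "\<exists>L. ((\<lambda>t. R a n t - F a n t) \<longlongrightarrow> L) (at (- of_nat j))"
proof -
  obtain g where g: "isCont g (- of_nat j)" and
    eq: "\<And>t. t \<in> ball (- of_nat j) 1 \<Longrightarrow> t \<noteq> - of_nat j \<Longrightarrow> Rreg a n j t =
       (\<Sum>k<a. (deriv ^^ k) (Rreg a n j) (- of_nat j) / fact k * (t - - of_nat j) ^ k)
        + (t - - of_nat j) ^ a * g t"
    using taylor_tail[OF Rreg_holo[OF j] zero_less_one, where m=a] by auto
  define E where "E t = (\<Sum>l=1..a. \<Sum>i\<in>{0..n}-{j}. cc a n l i / (t + of_nat i) ^ l)" for t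
  have Ec: "isCont E (- of_nat j)"
  proof -
    have nz: "(- of_nat j + of_nat i :: complex) \<noteq> 0" if "i \<in> {0..n}-{j}" for i
    proof -
      have "(- of_nat j + of_nat i :: complex) = of_int (int i - int j)" by simp
      moreover have "int i - int j \<noteq> 0" using that by auto
      ultimately show ?thesis by (metis of_int_eq_0_iff)
    qed
    then have "isCont (\<lambda>t. \<Sum>l=1..a. \<Sum>i\<in>{0..n}-{j}. cc a n l i / (t + of_nat i) ^ l) (- of_nat j)"
      by (intro continuous_intros) (use nz in auto)
    moreover have "E = (\<lambda>t. \<Sum>l=1..a. \<Sum>i\<in>{0..n}-{j}. cc a n l i / (t + of_nat i) ^ l)"
      by (simp add: fun_eq_iff E_def)
    ultimately show ?thesis by simp
  qed
  have evr: "\<forall>t. t \<noteq> - of_nat j \<and> dist t (- of_nat j) < 1 \<longrightarrow> g t - E t = R a n t - F a n t"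
  proof (intro allI impI)
    fix t :: complex assume t: "t \<noteq> - of_nat j \<and> dist t (- of_nat j) < 1"
    then have tb: "t \<in> ball (- of_nat j) 1" by (simp add: dist_commute)
    have tP: "t \<notin> Pol n" using notin_Pol_ball[OF tb] t by simp
    have nz: "t + of_nat j \<noteq> 0" using Pol_nz[OF tP j] .
    have "R a n t = Rreg a n j t / (t + of_nat j) ^ a" using R_Rreg[OF tP j] .
    also have "\<dots> = (\<Sum>k<a. (deriv ^^ k) (Rreg a n j) (- of_nat j) / fact k * (t + of_nat j) ^ k)
         / (t + of_nat j) ^ a + g t"
    proof -
      have "Rreg a n j t = (\<Sum>k<a. (deriv ^^ k) (Rreg a n j) (- of_nat j) / fact k * (t + of_nat j) ^ k)
        + (t + of_nat j) ^ a * g t" using eq[OF tb] t by simp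
      then show ?thesis using nz by (simp add: add_divide_distrib)
    qed
    also have "\<dots> = (\<Sum>l=1..a. cc a n l j / (t + of_nat j) ^ l) + g t"
      by (subst principal_sum[OF nz]) (simp add: cc_def)
    finally have 1: "R a n t = (\<Sum>l=1..a. cc a n l j / (t + of_nat j) ^ l) + g t" .
    have "F a n t = (\<Sum>l=1..a. cc a n l j / (t + of_nat j) ^ l + (\<Sum>i\<in>{0..n}-{j}. cc a n l i / (t + of_nat i) ^ l))"
      unfolding F_def using j by (intro sum.cong refl, subst sum.remove[of _ j]) auto
    also have "\<dots> = (\<Sum>l=1..a. cc a n l j / (t + of_nat j) ^ l) + E t"
      by (simp add: sum.distrib E_def)
    finally show "g t - E t = R a n t - F a n t" using 1 by simp
  qed
  have ev: "eventually (\<lambda>t. g t - E t = R a n t - F a n t) (at (- of_nat j))"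
    unfolding eventually_at using evr by (intro exI[of _ 1]) auto
  have "((\<lambda>t. g t - E t) \<longlongrightarrow> g (- of_nat j) - E (- of_nat j)) (at (- of_nat j))"
    using g Ec by (intro tendsto_intros) (auto simp: isCont_def)
  then show ?thesis using Lim_transform_eventually[OF _ ev] by blast
qed

lemma inv_shift: "((\<lambda>t::complex. inverse (t + of_nat j)) \<longlongrightarrow> 0) at_infinity"
proof -
  have "filterlim (\<lambda>t::complex. t + of_nat j) at_infinity at_infinity"
    by (rule tendsto_add_filterlim_at_infinity'[OF filterlim_ident tendsto_const])
  then show ?thesis by (rule filterlim_compose[OF tendsto_inverse_0])
qed

lemma inv_norm_pow: "k > 0 \<Longrightarrow> ((\<lambda>t::complex. C / norm t ^ k) \<longlongrightarrow> 0) at_infinity"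
  by (rule tendsto_divide_0[OF tendsto_const
      filterlim_at_top_imp_at_infinity[OF filterlim_pow_at_top[OF _ filterlim_norm_at_top]]])

lemma tR_tendsto:
  assumes a: "a \<ge> 6"
  shows "((\<lambda>t. t * R a n t) \<longlongrightarrow> 0) at_infinity"
proof (rule Lim_null_comparison)
  define C where "C = (fact n ^ (a - 6) * 2 ^ (6*n+1) * 2 ^ ((n+1)*a) :: real)"
  show "((\<lambda>t::complex. C / norm t ^ 4) \<longlongrightarrow> 0) at_infinity" by (rule inv_norm_pow) simp
  show "\<forall>\<^sub>F t in at_infinity. norm (t * R a n t) \<le> C / norm t ^ 4"
    unfolding eventually_at_infinity
  proof (intro exI[of _ "2 * real n + 2"] allI impI)
    fix t :: complex assume t: "2 * real n + 2 \<le> norm t"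
    then have t0: "norm t > 0" by (smt (verit) of_nat_0_le_iff)
    have "norm (t * R a n t) = norm t * norm (R a n t)" by (simp add: norm_mult)
    also have "\<dots> \<le> norm t * (C / norm t ^ 5)"
      using R_bound[OF a t] by (intro mult_left_mono) (auto simp: C_def)
    also have "\<dots> = C / norm t ^ 4"
    proof -
      have "norm t ^ 5 = norm t * norm t ^ 4" by (subst power_Suc[symmetric]) simp
      then show ?thesis using t0 by simp
    qed
    finally show "norm (t * R a n t) \<le> C / norm t ^ 4" .
  qed
qed

lemma R_tendsto:
  assumes a: "a \<ge> 6"
  shows "(R a n \<longlongrightarrow> 0) at_infinity"
proof -
  have "((\<lambda>t. (t * R a n t) * inverse t) \<longlongrightarrow> 0 * 0) at_infinity"
    by (intro tendsto_mult tR_tendsto[OF a] tendsto_inverse_0)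
  moreover have "eventually (\<lambda>t. (t * R a n t) * inverse t = R a n t) at_infinity"
    unfolding eventually_at_infinity
  proof (intro exI[of _ 1] allI impI)
    fix x :: complex assume "1 \<le> norm x"
    then have "x \<noteq> 0" by auto
    then show "x * R a n x * inverse x = R a n x" by simp
  qed
  ultimately show ?thesis using Lim_transform_eventually by fastforce
qed

lemma F_alt: "t \<notin> Pol n \<Longrightarrow> F a n t = (\<Sum>l=1..a. \<Sum>j=0..n. cc a n l j * inverse (t + of_nat j) ^ l)"
  unfolding F_def by (simp add: divide_inverse power_inverse)

lemma F_tendsto: "(F a n \<longlongrightarrow> 0) at_infinity"
proof -
  have "((\<lambda>t. \<Sum>l=1..a. \<Sum>j=0..n. cc a n l j * inverse (t + of_nat j) ^ l) \<longlongrightarrow>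
      (\<Sum>l=1..a. \<Sum>j=0..n. cc a n l j * 0 ^ l)) at_infinity"
    by (intro tendsto_intros inv_shift)
  moreover have "(\<Sum>l=1..a. \<Sum>j=0..n. cc a n l j * (0::complex) ^ l) = 0"
    by (auto intro!: sum.neutral simp: zero_power)
  moreover have "eventually (\<lambda>t. (\<Sum>l=1..a. \<Sum>j=0..n. cc a n l j * inverse (t + of_nat j) ^ l) = F a n t) at_infinity"
    unfolding eventually_at_infinity
    by (intro exI[of _ "real n + 1"] allI impI, rule F_alt[symmetric], rule notin_Pol_big) auto
  ultimately show ?thesis using Lim_transform_eventually by fastforce
qed

lemma R_holo: "R a n holomorphic_on (UNIV - Pol n)"
  unfolding R_def pochhammer_prod
  by (intro holomorphic_intros) (auto simp: prod_zero_iff Pol_nz)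

lemma F_holo: "F a n holomorphic_on (UNIV - Pol n)"
  unfolding F_def
  by (intro holomorphic_intros) (auto simp: Pol_nz)

lemma partial_fractions:
  assumes a: "a \<ge> 6" and t: "t \<notin> Pol n"
  shows "R a n t = F a n t"
proof -
  define G where "G t = R a n t - F a n t" for t
  define G' where "G' t = (if t \<in> Pol n then Lim (at t) G else G t)" for t
  have evG: "eventually (\<lambda>t. G' t = G t) (at (- of_nat j))" for j
    unfolding eventually_at
  proof (intro exI[of _ 1] conjI ballI impI)
    fix x :: complex assume "x \<noteq> - of_nat j \<and> dist x (- of_nat j) < 1"
    then have "x \<notin> Pol n" by (intro notin_Pol_ball) (auto simp: dist_commute)
    then show "G' x = G x" by (simp add: G'_def)
  qed simp
  have hol: "G' holomorphic_on UNIV"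
  proof (rule no_isolated_singularity'[where K = "Pol n"])
    fix z assume "z \<in> Pol n"
    then obtain j where j: "j \<le> n" and z: "z = - of_nat j" unfolding Pol_def by auto
    obtain L where L: "(G \<longlongrightarrow> L) (at z)"
      using near_pole[OF j, of a] z by (auto simp: G_def[abs_def])
    have "G' z = L" using \<open>z \<in> Pol n\<close> tendsto_Lim[OF trivial_limit_at L] by (simp add: G'_def)
    moreover have "(G' \<longlongrightarrow> L) (at z)"
    proof -
      have "eventually (\<lambda>t. G t = G' t) (at z)" using evG[of j] z by (auto elim: eventually_mono)
      from Lim_transform_eventually[OF L this] show ?thesis .
    qed
    ultimately show "(G' \<longlongrightarrow> G' z) (at z within UNIV)" by simp
  next
    have "G holomorphic_on (UNIV - Pol n)"
      unfolding G_def[abs_def] by (intro holomorphic_intros R_holo F_holo)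
    then show "G' holomorphic_on (UNIV - Pol n)"
      by (rule holomorphic_transform) (simp add: G'_def)
  qed auto
  have "(G' \<longlongrightarrow> 0) at_infinity"
  proof -
    have "(G \<longlongrightarrow> 0 - 0) at_infinity"
      unfolding G_def[abs_def] by (intro tendsto_intros R_tendsto[OF a] F_tendsto)
    moreover have "eventually (\<lambda>t. G t = G' t) at_infinity"
      unfolding eventually_at_infinity
    proof (intro exI[of _ "real n + 1"] allI impI)
      fix x :: complex assume "real n + 1 \<le> norm x"
      then have "x \<notin> Pol n" by (intro notin_Pol_big) simp
      then show "G x = G' x" by (simp add: G'_def)
    qed
    ultimately show ?thesis using Lim_transform_eventually by fastforce
  qed
  from Liouville_weak_0[OF hol this, of t] t show ?thesis by (simp add: G'_def G_def)
qed

lemma tF_tendsto: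
  assumes a: "a \<ge> 1"
  shows "((\<lambda>t. t * F a n t) \<longlongrightarrow> (\<Sum>j=0..n. cc a n 1 j)) at_infinity"
proof -
  have lim1: "((\<lambda>t::complex. 1 - of_nat j * inverse (t + of_nat j)) \<longlongrightarrow> 1 - of_nat j * 0) at_infinity" for j
    by (intro tendsto_diff tendsto_const tendsto_mult inv_shift)
  have "((\<lambda>t. \<Sum>l=1..a. \<Sum>j=0..n. cc a n l j * (1 - of_nat j * inverse (t + of_nat j)) * inverse (t + of_nat j) ^ (l - 1))
     \<longlongrightarrow> (\<Sum>l=1..a. \<Sum>j=0..n. cc a n l j * (1 - of_nat j * 0) * 0 ^ (l - 1))) at_infinity"
    by (intro tendsto_sum tendsto_mult[OF tendsto_mult[OF tendsto_const lim1] tendsto_power[OF inv_shift]])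
  moreover have "(\<Sum>l=1..a. \<Sum>j=0..n. cc a n l j * (1 - of_nat j * 0) * (0::complex) ^ (l - 1)) = (\<Sum>j=0..n. cc a n 1 j)"
  proof -
    have "(\<Sum>l=1..a. \<Sum>j=0..n. cc a n l j * (1 - of_nat j * 0) * (0::complex) ^ (l - 1))
        = (\<Sum>l=1..a. if l = 1 then (\<Sum>j=0..n. cc a n 1 j) else 0)"
    proof (rule sum.cong[OF refl])
      fix l assume "l \<in> {1..a}"
      then show "(\<Sum>j=0..n. cc a n l j * (1 - of_nat j * 0) * (0::complex) ^ (l - 1)) = (if l = 1 then (\<Sum>j=0..n. cc a n 1 j) else 0)"
        by (cases "l = 1") (auto simp: zero_power)
    qed
    also have "\<dots> = (\<Sum>j=0..n. cc a n 1 j)" using a by (simp add: sum.delta)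
    finally show ?thesis .
  qed
  moreover have "eventually (\<lambda>t. (\<Sum>l=1..a. \<Sum>j=0..n. cc a n l j * (1 - of_nat j * inverse (t + of_nat j)) * inverse (t + of_nat j) ^ (l - 1)) = t * F a n t) at_infinity"
    unfolding eventually_at_infinity
  proof (intro exI[of _ "real n + 1"] allI impI)
    fix t :: complex assume "real n + 1 \<le> norm t"
    then have tP: "t \<notin> Pol n" by (intro notin_Pol_big) simp
    have "t * F a n t = (\<Sum>l=1..a. \<Sum>j=0..n. t * (cc a n l j * inverse (t + of_nat j) ^ l))"
      by (simp add: F_alt[OF tP] sum_distrib_left)
    also have "\<dots> = (\<Sum>l=1..a. \<Sum>j=0..n. cc a n l j * (1 - of_nat j * inverse (t + of_nat j)) * inverse (t + of_nat j) ^ (l - 1))"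
    proof (intro sum.cong refl)
      fix l j assume l: "l \<in> {1..a}" and j: "j \<in> {0..n}"
      have nz: "t + of_nat j \<noteq> 0" using Pol_nz[OF tP] j by simp
      define v where "v = inverse (t + of_nat j)"
      have e: "v ^ l = v * v ^ (l - 1)"
        using l by (cases l) auto
      have tv: "t * v = 1 - of_nat j * v"
        using nz by (simp add: v_def field_simps)
      have "t * (cc a n l j * v ^ l) = cc a n l j * (t * v) * v ^ (l - 1)"
        unfolding e by (simp add: mult_ac)
      then show "t * (cc a n l j * inverse (t + of_nat j) ^ l) =
          cc a n l j * (1 - of_nat j * inverse (t + of_nat j)) * inverse (t + of_nat j) ^ (l - 1)"
        by (simp only: v_def[symmetric] tv[symmetric])
    qed
    finally show "(\<Sum>l=1..a. \<Sum>j=0..n. cc a n l j * (1 - of_nat j * inverse (t + of_nat j)) * inverse (t + of_nat j) ^ (l - 1)) = t * F a n t" by simp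
  qed
  ultimately show ?thesis using Lim_transform_eventually by fastforce
qed

lemma P1_zero:
  assumes a: "a \<ge> 6"
  shows "P a n 1 1 = 0"
proof -
  have "((\<lambda>t. t * F a n t) \<longlongrightarrow> 0) at_infinity"
  proof -
    have "eventually (\<lambda>t. t * R a n t = t * F a n t) at_infinity"
      unfolding eventually_at_infinity
    proof (intro exI[of _ "real n + 1"] allI impI)
      fix t :: complex assume "real n + 1 \<le> norm t"
      then have tP: "t \<notin> Pol n" by (intro notin_Pol_big) simp
      show "t * R a n t = t * F a n t" by (simp add: partial_fractions[OF a tP])
    qed
    from Lim_transform_eventually[OF tR_tendsto[OF a] this] show ?thesis .
  qed
  then have "(\<Sum>j=0..n. cc a n 1 j) = 0"
    using tendsto_unique[OF trivial_limit_at_infinity tF_tendsto[of a n]] a by simp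
  then show ?thesis by (simp add: P_def)
qed

lemma deriv_term:
  assumes "t + of_nat j \<noteq> (0::complex)"
  shows "((\<lambda>t. c / (t + of_nat j) ^ l) has_field_derivative (- of_nat l * c / (t + of_nat j) ^ (l + 1))) (at t)"
proof -
  have "((\<lambda>t. c / (t + of_nat j) ^ l) has_field_derivative
      - (c * (of_nat l * (t + of_nat j) ^ (l - 1) * 1)) / ((t + of_nat j) ^ l * (t + of_nat j) ^ l)) (at t)"
    using assms by (intro derivative_eq_intros refl) auto
  moreover have "- (c * (of_nat l * (t + of_nat j) ^ (l - 1) * 1)) / ((t + of_nat j) ^ l * (t + of_nat j) ^ l)
      = - of_nat l * c / (t + of_nat j) ^ (l + 1)"
  proof (cases l)
    case (Suc m)
    define u where "u = t + of_nat j"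
    have u: "u \<noteq> 0" using assms by (simp add: u_def)
    have "- (c * (of_nat l * u ^ (l - 1) * 1)) / (u ^ l * u ^ l) = - of_nat l * c / u ^ (l + 1)"
      using u Suc by (simp add: field_simps power_add)
    then show ?thesis by (simp add: u_def)
  qed simp
  ultimately show ?thesis by simp
qed

definition F1 where "F1 a n t = (\<Sum>l=1..a. \<Sum>j=0..n. - of_nat l * cc a n l j / (t + of_nat j) ^ (l + 1))"
definition F2 where "F2 a n t = (\<Sum>l=1..a. \<Sum>j=0..n. - of_nat (l + 1) * (- of_nat l * cc a n l j) / (t + of_nat j) ^ (l + 1 + 1))"

lemma deriv2_R:
  assumes a: "a \<ge> 6" and x: "Re x > 0"
  shows "(deriv ^^ 2) (R a n) x = (\<Sum>l=1..a. \<Sum>j=0..n. of_nat (l * (l + 1)) * cc a n l j / (x + of_nat j) ^ (l + 2))"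
proof -
  define H where "H = {t::complex. Re t > 0}"
  have oH: "open H" unfolding H_def by (simp add: open_halfspace_Re_gt)
  have HP: "H \<subseteq> UNIV - Pol n" unfolding H_def using notin_Pol_Re by auto
  have nzH: "t + of_nat j \<noteq> 0" if "t \<in> H" for t j
  proof
    assume "t + of_nat j = 0"
    then have "Re (t + of_nat j) = 0" by simp
    with that show False by (simp add: H_def)
  qed
  have "(deriv ^^ 2) (R a n) x = (deriv ^^ 2) (F a n) x"
    by (rule higher_deriv_transform_within_open[OF holomorphic_on_subset[OF R_holo HP]
          holomorphic_on_subset[OF F_holo HP] oH])
       (use x HP partial_fractions[OF a] in \<open>auto simp: H_def\<close>)
  also have "\<dots> = deriv (deriv (F a n)) x" by (simp add: numeral_2_eq_2)
  also have "deriv (deriv (F a n)) x = deriv (F1 a n) x"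
  proof (rule deriv_cong_ev[OF _ refl])
    have "eventually (\<lambda>t. t \<in> H) (nhds x)" using oH x by (intro eventually_nhds_in_open) (auto simp: H_def)
    then show "eventually (\<lambda>t. deriv (F a n) t = F1 a n t) (nhds x)"
    proof (rule eventually_mono)
      fix t assume t: "t \<in> H"
      show "deriv (F a n) t = F1 a n t"
        unfolding F_def[abs_def] F1_def
        by (rule DERIV_imp_deriv, intro DERIV_sum deriv_term nzH[OF t])
    qed
  qed
  also have "deriv (F1 a n) x = F2 a n x"
    unfolding F1_def[abs_def] F2_def
    by (rule DERIV_imp_deriv, intro DERIV_sum deriv_term nzH) (simp add: H_def x)
  also have "F2 a n x = (\<Sum>l=1..a. \<Sum>j=0..n. of_nat (l * (l + 1)) * cc a n l j / (x + of_nat j) ^ (l + 2))"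
    unfolding F2_def by (intro sum.cong refl) (simp add: algebra_simps)
  finally show ?thesis .
qed

lemma T_bound:
  fixes w :: complex
  assumes w: "norm w \<le> 1" and s: "s \<ge> 2"
  shows "norm (w ^ Suc k / (of_nat (Suc k) + of_nat j) ^ s) \<le> inverse (real (Suc k) ^ 2)"
proof -
  have e: "(of_nat (Suc k) + of_nat j :: complex) = of_nat (Suc k + j)" by simp
  have "norm (w ^ Suc k / (of_nat (Suc k) + of_nat j) ^ s) = norm w ^ Suc k / real (Suc k + j) ^ s"
    unfolding e by (simp only: norm_divide norm_power norm_of_nat)
  also have "\<dots> \<le> 1 / real (Suc k) ^ 2"
  proof (rule frac_le)
    show "norm w ^ Suc k \<le> 1" using w by (intro power_le_one) auto
    have "real (Suc k) ^ 2 \<le> real (Suc k) ^ s"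
      using s by (intro power_increasing) auto
    also have "\<dots> \<le> real (Suc k + j) ^ s" by (intro power_mono) auto
    finally show "real (Suc k) ^ 2 \<le> real (Suc k + j) ^ s" .
  qed auto
  finally show ?thesis by (simp add: divide_inverse)
qed

lemma T_summable:
  fixes w :: complex
  assumes w: "norm w \<le> 1" and s: "s \<ge> 2"
  shows "summable (\<lambda>k. w ^ Suc k / (of_nat (Suc k) + of_nat j) ^ s)"
proof (rule summable_comparison_test)
  show "\<exists>N. \<forall>k\<ge>N. norm (w ^ Suc k / (of_nat (Suc k) + of_nat j) ^ s) \<le> inverse (real (Suc k) ^ 2)"
    using T_bound[OF w s] by blast
  have "summable (\<lambda>k. inverse (real k ^ 2))" by (rule inverse_power_summable) simp
  then show "summable (\<lambda>k. inverse (real (Suc k) ^ 2))"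
    by (subst summable_Suc_iff)
qed

lemma polylog_sums:
  fixes w :: complex
  assumes w: "norm w \<le> 1" and s: "s \<ge> 2"
  shows "(\<lambda>k. w ^ Suc k / of_nat (Suc k) ^ s) sums polylog s w"
  using T_summable[OF w s, of 0] unfolding polylog_def by (simp add: summable_sums)

lemma tail_sums:
  fixes w :: complex
  assumes w: "norm w \<le> 1" "w \<noteq> 0" and s: "s \<ge> 2"
  shows "(\<lambda>k. w ^ Suc k / (of_nat (Suc k) + of_nat j) ^ s) sums
          ((polylog s w - (\<Sum>k<j. w ^ Suc k / of_nat (Suc k) ^ s)) / w ^ j)"
proof -
  from sums_divide[OF sums_split_initial_segment[OF polylog_sums[OF w(1) s], of j], of "w ^ j"]
  have "(\<lambda>k. w ^ Suc (k + j) / of_nat (Suc (k + j)) ^ s / w ^ j) sums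
          ((polylog s w - (\<Sum>k<j. w ^ Suc k / of_nat (Suc k) ^ s)) / w ^ j)" .
  moreover have "w ^ Suc (k + j) / of_nat (Suc (k + j)) ^ s / w ^ j = w ^ Suc k / (of_nat (Suc k) + of_nat j) ^ s" for k
  proof -
    have "(of_nat (Suc (k + j)) :: complex) = of_nat (Suc k) + of_nat j" by simp
    moreover have "w ^ Suc (k + j) = w ^ Suc k * w ^ j" by (simp add: power_add)
    ultimately show ?thesis using w by (simp add: ac_simps)
  qed
  ultimately show ?thesis by simp
qed

lemma tail_conv:
  fixes z :: complex
  assumes z: "z \<noteq> 0"
  shows "(L - (\<Sum>k<j. (1/z) ^ Suc k / of_nat (Suc k) ^ s)) / (1/z) ^ j
       = z ^ j * L - (\<Sum>k=1..j. z ^ (j - k) / of_nat k ^ s)"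
proof -
  have "(\<Sum>k=1..j. z ^ (j - k) / of_nat k ^ s) = (\<Sum>k<j. z ^ (j - Suc k) / of_nat (Suc k) ^ s)"
    by (simp add: sum.atLeast1_atMost_eq)
  also have "\<dots> = (\<Sum>k<j. z ^ j * ((1/z) ^ Suc k / of_nat (Suc k) ^ s))"
  proof (rule sum.cong[OF refl])
    fix k assume "k \<in> {..<j}"
    then have "j = (j - Suc k) + Suc k" by simp
    then have "z ^ j = z ^ (j - Suc k) * z ^ Suc k" by (metis power_add)
    then show "z ^ (j - Suc k) / of_nat (Suc k) ^ s = z ^ j * ((1/z) ^ Suc k / of_nat (Suc k) ^ s)"
      using z by (simp add: field_simps)
  qed
  finally have "(\<Sum>k=1..j. z ^ (j - k) / of_nat k ^ s) = z ^ j * (\<Sum>k<j. (1/z) ^ Suc k / of_nat (Suc k) ^ s)"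
    by (simp add: sum_distrib_left)
  then show ?thesis using z by (simp add: field_simps)
qed


lemma S_formula:
  fixes z :: complex
  assumes a: "a \<ge> 6" and z: "norm z \<ge> 1"
  shows "S a n z = P0 a n z + (\<Sum>l=1..a. of_nat (l * (l + 1)) / 2 * P a n l z * polylog (l + 2) (1 / z))"
proof -
  define w where "w = 1 / z"
  have z0: "z \<noteq> 0" using z by auto
  have w1: "norm w \<le> 1" using z by (simp add: w_def norm_divide divide_le_eq_1)
  have w0: "w \<noteq> 0" using z0 by (simp add: w_def)
  define c where "c l j = of_nat (l * (l + 1)) * cc a n l j / 2" for l j
  define T where "T l j k = w ^ Suc k / (of_nat (Suc k) + of_nat j) ^ (l + 2)" for l j k
  have Ts: "summable (T l j)" for l j
    unfolding T_def[abs_def] by (rule T_summable[OF w1]) simp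
  have trm: "(1/2) * (deriv ^^ 2) (R a n) (of_nat (Suc k)) * z powi (- int (Suc k))
      = (\<Sum>l=1..a. \<Sum>j=0..n. c l j * T l j k)" for k
  proof -
    have zp: "z powi (- int (Suc k)) = w ^ Suc k"
      by (simp only: power_int_minus power_int_of_nat w_def power_one_over inverse_eq_divide)
    have "(deriv ^^ 2) (R a n) (of_nat (Suc k)) = (\<Sum>l=1..a. \<Sum>j=0..n. of_nat (l * (l + 1)) * cc a n l j / (of_nat (Suc k) + of_nat j) ^ (l + 2))"
      by (rule deriv2_R[OF a]) simp
    then show ?thesis unfolding zp
      by (simp add: sum_distrib_left sum_distrib_right c_def T_def field_simps)
  qed
  have "S a n z = (\<Sum>k. \<Sum>l=1..a. \<Sum>j=0..n. c l j * T l j k)"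
    unfolding S_def trm ..
  also have "\<dots> = (\<Sum>l=1..a. \<Sum>k. \<Sum>j=0..n. c l j * T l j k)"
    by (rule suminf_sum) (intro summable_sum summable_mult Ts)
  also have "\<dots> = (\<Sum>l=1..a. \<Sum>j=0..n. \<Sum>k. c l j * T l j k)"
    by (intro sum.cong refl suminf_sum summable_mult Ts)
  also have "\<dots> = (\<Sum>l=1..a. \<Sum>j=0..n. c l j * (z ^ j * polylog (l + 2) w - (\<Sum>k=1..j. z ^ (j - k) / of_nat k ^ (l + 2))))"
  proof (intro sum.cong refl)
    fix l j
    have "T l j sums ((polylog (l+2) w - (\<Sum>k<j. w ^ Suc k / of_nat (Suc k) ^ (l+2))) / w ^ j)"
      unfolding T_def[abs_def] by (rule tail_sums[OF w1 w0]) simp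
    then have "suminf (T l j) = (polylog (l+2) w - (\<Sum>k<j. w ^ Suc k / of_nat (Suc k) ^ (l+2))) / w ^ j"
      by (rule sums_unique[symmetric])
    also have "\<dots> = z ^ j * polylog (l + 2) w - (\<Sum>k=1..j. z ^ (j - k) / of_nat k ^ (l + 2))"
      unfolding w_def by (rule tail_conv[OF z0])
    finally have "suminf (T l j) = z ^ j * polylog (l + 2) w - (\<Sum>k=1..j. z ^ (j - k) / of_nat k ^ (l + 2))" .
    then show "(\<Sum>k. c l j * T l j k) = c l j * (z ^ j * polylog (l + 2) w - (\<Sum>k=1..j. z ^ (j - k) / of_nat k ^ (l + 2)))"
      by (simp add: suminf_mult Ts)
  qed
  also have "\<dots> = (\<Sum>l=1..a. of_nat (l * (l + 1)) / 2 * P a n l z * polylog (l + 2) w)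
       - (\<Sum>l=1..a. \<Sum>j=0..n. c l j * (\<Sum>k=1..j. z ^ (j - k) / of_nat k ^ (l + 2)))"
    by (simp add: right_diff_distrib sum_subtractf P_def c_def sum_distrib_left sum_distrib_right
        sum.distrib[symmetric] mult_ac)
  also have "(\<Sum>l=1..a. \<Sum>j=0..n. c l j * (\<Sum>k=1..j. z ^ (j - k) / of_nat k ^ (l + 2))) = - P0 a n z"
  proof -
    have "(\<Sum>l=1..a. \<Sum>j=0..n. c l j * (\<Sum>k=1..j. z ^ (j - k) / of_nat k ^ (l + 2)))
        = (\<Sum>l=1..a. \<Sum>j=1..n. c l j * (\<Sum>k=1..j. z ^ (j - k) / of_nat k ^ (l + 2)))"
    proof (rule sum.cong[OF refl])
      fix l
      show "(\<Sum>j=0..n. c l j * (\<Sum>k=1..j. z ^ (j - k) / of_nat k ^ (l + 2)))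
          = (\<Sum>j=1..n. c l j * (\<Sum>k=1..j. z ^ (j - k) / of_nat k ^ (l + 2)))"
        by (subst sum.atLeast_Suc_atMost) simp_all
    qed
    also have "\<dots> = (\<Sum>l=1..a. \<Sum>j=1..n. \<Sum>k=1..j.
       of_nat (l * (l + 1)) * cc a n l j / (2 * of_nat k ^ (l + 2)) * z ^ (j - k))"
      unfolding sum_distrib_left
      by (intro sum.cong refl) (simp add: c_def field_simps)
    finally show ?thesis by (simp add: P0_def)
  qed
  finally show ?thesis by (simp add: w_def)
qed

lemma Rreg_sym:
  assumes a: "even a" and j: "j \<le> n"
  shows "Rreg a n (n - j) (- t - of_nat n) = - Rreg a n j t"
proof -
  have e1: "(- t - of_nat n + of_nat n / 2 :: complex) = - (t + of_nat n / 2)" by (simp add: field_simps)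
  have e2: "pochhammer (- t - of_nat n - of_nat n) n = (-1) ^ n * pochhammer (t + of_nat n + 1) n"
  proof -
    have q1: "- t - of_nat n - of_nat n = - (t + 2 * of_nat n)" by simp
    have q2: "t + of_nat n + 1 = t + 2 * of_nat n - of_nat n + 1" by simp
    show ?thesis by (simp only: q1 q2 pochhammer_minus)
  qed
  have e3: "pochhammer (- t - of_nat n + of_nat n + 1) n = (-1) ^ n * pochhammer (t - of_nat n) n"
  proof -
    have q1: "- t - of_nat n + of_nat n + 1 = - (t - 1)" by simp
    have q2: "t - of_nat n = t - 1 - of_nat n + 1" by simp
    show ?thesis by (simp only: q1 q2 pochhammer_minus)
  qed
  have e4: "(\<Prod>i\<in>{0..n} - {n - j}. (- t - of_nat n + of_nat i) ^ a) = (\<Prod>i\<in>{0..n} - {j}. (t + of_nat i) ^ a)"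
  proof (rule prod.reindex_bij_witness[where i="\<lambda>i. n - i" and j="\<lambda>i. n - i"])
    fix i assume i: "i \<in> {0..n} - {n - j}"
    then have eq: "(t + of_nat (n - i) :: complex) = - (- t - of_nat n + of_nat i)"
      by (simp add: of_nat_diff)
    show "(t + of_nat (n - i)) ^ a = (- t - of_nat n + of_nat i) ^ a"
      by (subst eq) (rule power_minus_even[OF a])
  qed (use j in auto)
  have m1: "((-1::complex) ^ n) ^ 3 * ((-1) ^ n) ^ 3 = 1"
  proof -
    have "((-1::complex) ^ n) ^ 3 * ((-1) ^ n) ^ 3 = ((-1) ^ n * (-1) ^ n) ^ 3"
      by (simp only: power_mult_distrib)
    also have "((-1::complex) ^ n * (-1) ^ n) ^ 3 = 1"
      by (simp add: power_mult_distrib[symmetric])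
    finally show ?thesis .
  qed
  have m6: "((-1::complex) ^ n) ^ 6 = 1"
    by (simp only: power_mult[symmetric]) (simp add: neg_one_even_power)
  show ?thesis
    unfolding Rreg_def e1 e2 e3 e4
    by (simp add: power_mult_distrib field_simps m6)
qed

lemma Rreg_open_holo: "Rreg a n j holomorphic_on UNIV - Pol n"
  unfolding Rreg_def pochhammer_prod
  by (intro holomorphic_intros) (auto simp: prod_zero_iff Pol_nz)

lemma cc_sym:
  assumes a: "even a" and j: "j \<le> n"
  shows "cc a n l j = - ((-1) ^ (a - l) * cc a n l (n - j))"
proof -
  define k where "k = a - l"
  define S where "S = ball (- of_nat j :: complex) 1"
  define T where "T = ball (- of_nat (n - j) :: complex) 1"
  have fT: "Rreg a n (n - j) holomorphic_on T"
    unfolding T_def by (rule Rreg_holo) simp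
  have ST: "(-1) * w + (- of_nat n) \<in> T" if "w \<in> S" for w
  proof -
    have eq: "(-1) * w + (- of_nat n) - (- of_nat (n - j)) = - (w + of_nat j)"
      using j by (simp add: of_nat_diff)
    have "dist (- of_nat (n - j)) ((-1) * w + (- of_nat n)) = norm (((-1) * w + (- of_nat n)) - (- of_nat (n - j)))"
      by (simp only: dist_norm norm_minus_commute)
    also have "\<dots> = norm (w + of_nat j)" by (simp only: eq norm_minus_cancel)
    also have "norm (w + of_nat j) < 1" using that by (simp add: S_def dist_norm norm_minus_commute)
    finally show ?thesis by (simp add: T_def)
  qed
  have hol: "(\<lambda>w. Rreg a n (n - j) ((-1) * w + (- of_nat n))) holomorphic_on S"
  proof -
    have img: "(\<lambda>w. (-1) * w + (- of_nat n)) ` S \<subseteq> T" using ST by auto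
    have "(\<lambda>w. (-1) * w + (- of_nat n :: complex)) holomorphic_on S" by (intro holomorphic_intros)
    from holomorphic_on_compose[OF this holomorphic_on_subset[OF fT img]] show ?thesis by (simp add: o_def)
  qed
  have eqf: "Rreg a n j = (\<lambda>w. - Rreg a n (n - j) ((-1) * w + (- of_nat n)))"
    using Rreg_sym[OF a j] by (auto simp: fun_eq_iff)
  have "(deriv ^^ k) (Rreg a n j) (- of_nat j) = - (deriv ^^ k) (\<lambda>w. Rreg a n (n - j) ((-1) * w + (- of_nat n))) (- of_nat j)"
    unfolding eqf by (rule higher_deriv_uminus[OF hol]) (simp_all add: S_def)
  also have "(deriv ^^ k) (\<lambda>w. Rreg a n (n - j) ((-1) * w + (- of_nat n))) (- of_nat j)
      = (-1) ^ k * (deriv ^^ k) (Rreg a n (n - j)) ((-1) * (- of_nat j) + (- of_nat n))"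
    by (rule higher_deriv_compose_linear'[where S=S, OF fT _ _ _ ST]) (simp_all add: S_def T_def)
  also have "((-1) * (- of_nat j) + (- of_nat n) :: complex) = - of_nat (n - j)"
    using j by (simp add: of_nat_diff)
  finally show ?thesis unfolding cc_def k_def by simp
qed

lemma P_even_zero:
  assumes a: "even a" and l: "even l" "l \<le> a"
  shows "P a m l 1 = 0"
proof -
  have "(\<Sum>j=0..m. cc a m l j) = (\<Sum>j=0..m. cc a m l (m + 0 - j))"
    by (rule sum.atLeastAtMost_rev)
  also have "\<dots> = (\<Sum>j=0..m. - cc a m l j)"
  proof (rule sum.cong[OF refl])
    fix j assume "j \<in> {0..m}"
    then have j: "j \<le> m" by simp
    have "even (a - l)" using a l by auto
    then show "cc a m l (m + 0 - j) = - cc a m l j"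
      using cc_sym[OF a j, of l] by simp
  qed
  finally have "(\<Sum>j=0..m. cc a m l j) = 0" by (simp add: sum_negf)
  then show ?thesis by (simp add: P_def)
qed

lemma odd_sum_reindex:
  fixes f :: "nat \<Rightarrow> complex"
  assumes ev: "even a"
  shows "(\<Sum>l\<in>{l\<in>{1..a}. odd l \<and> 3 \<le> l}. of_nat (l * (l + 1)) / 2 * f l * g (l + 2))
       = (\<Sum>j=2..a div 2. of_nat (j * (2 * j - 1)) * f (2 * j - 1) * g (2 * j + 1))"
proof (rule sum.reindex_bij_witness[where i="\<lambda>j. 2 * j - 1" and j="\<lambda>l. (l + 1) div 2"])
  fix l assume l: "l \<in> {l\<in>{1..a}. odd l \<and> 3 \<le> l}"
  then obtain k where k: "l = 2 * k + 1" by (auto elim: oddE)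
  show "2 * ((l + 1) div 2) - 1 = l" using k by simp
  have "l \<noteq> a" using l ev by auto
  then show "(l + 1) div 2 \<in> {2..a div 2}" using l k ev by (auto elim!: evenE)
  have e1: "(l + 1) div 2 = k + 1" using k by simp
  have e2: "of_nat ((k + 1) * (2 * (k + 1) - 1)) = (of_nat (l * (l + 1)) / 2 :: complex)"
  proof -
    have "l * (l + 1) = 2 * ((k + 1) * (2 * (k + 1) - 1))" using k by (simp add: algebra_simps)
    then have "(of_nat (l * (l + 1)) :: complex) = 2 * of_nat ((k + 1) * (2 * (k + 1) - 1))"
      by (metis of_nat_mult of_nat_numeral)
    then show ?thesis by simp
  qed
  show "of_nat ((l + 1) div 2 * (2 * ((l + 1) div 2) - 1)) * f (2 * ((l + 1) div 2) - 1) * g (2 * ((l + 1) div 2) + 1)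
        = of_nat (l * (l + 1)) / 2 * f l * g (l + 2)"
    unfolding e1 e2 using k by simp
next
  fix j assume j: "j \<in> {2..a div 2}"
  show "(2 * j - 1 + 1) div 2 = j" using j by simp
  show "2 * j - 1 \<in> {l\<in>{1..a}. odd l \<and> 3 \<le> l}" using j ev by auto
qed

theorem mainTheorem2:
  fixes a n :: nat
  assumes "a \<ge> 6"
  shows "(\<forall>z::complex. norm z > 1 \<longrightarrow>
            S a n z = P0 a n z + (\<Sum>l=1..a. of_nat (l * (l + 1)) / 2 * P a n l z * polylog (l + 2) (1 / z)))
       \<and> P a n 1 1 = 0
       \<and> (even a \<longrightarrow>
            (\<forall>m l. even l \<and> 2 \<le> l \<and> l \<le> a \<longrightarrow> P a m l 1 = 0)
          \<and> S a n 1 = P0 a n 1 + (\<Sum>j=2..a div 2. of_nat (j * (2 * j - 1)) * P a n (2 * j - 1) 1 * zeta_nat (2 * j + 1)))"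
proof (intro conjI impI allI)
  fix z :: complex assume "norm z > 1"
  then show "S a n z = P0 a n z + (\<Sum>l=1..a. of_nat (l * (l + 1)) / 2 * P a n l z * polylog (l + 2) (1 / z))"
    by (intro S_formula[OF assms]) simp
next
  show P1: "P a n 1 1 = 0" by (rule P1_zero[OF assms])
next
  fix m l assume "even a" "even l \<and> 2 \<le> l \<and> l \<le> a"
  then show "P a m l 1 = 0" by (intro P_even_zero) auto
next
  assume ev: "even a"
  have pz: "polylog s 1 = zeta_nat s" for s by (simp add: polylog_def zeta_nat_def)
  have "S a n 1 = P0 a n 1 + (\<Sum>l=1..a. of_nat (l * (l + 1)) / 2 * P a n l 1 * zeta_nat (l + 2))"
    using S_formula[OF assms, of 1] by (simp add: pz)
  also have "(\<Sum>l=1..a. of_nat (l * (l + 1)) / 2 * P a n l 1 * zeta_nat (l + 2))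
      = (\<Sum>l\<in>{l\<in>{1..a}. odd l \<and> 3 \<le> l}. of_nat (l * (l + 1)) / 2 * P a n l 1 * zeta_nat (l + 2))"
  proof (rule sum.mono_neutral_right)
    show "\<forall>l\<in>{1..a} - {l\<in>{1..a}. odd l \<and> 3 \<le> l}. of_nat (l * (l + 1)) / 2 * P a n l 1 * zeta_nat (l + 2) = 0"
    proof
      fix l assume l: "l \<in> {1..a} - {l\<in>{1..a}. odd l \<and> 3 \<le> l}"
      show "of_nat (l * (l + 1)) / 2 * P a n l 1 * zeta_nat (l + 2) = 0"
      proof (cases "l = 1")
        case True then show ?thesis using P1_zero[OF assms, of n] by simp
      next
        case False
        have l1: "1 \<le> l" "l \<le> a" "\<not> (odd l \<and> 3 \<le> l)" using l by auto
        then have "even l" "2 \<le> l" "l \<le> a" using False by presburger+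
        then show ?thesis using P_even_zero[OF ev, of l n] by simp
      qed
    qed
  qed auto
  also have "\<dots> = (\<Sum>j=2..a div 2. of_nat (j * (2 * j - 1)) * P a n (2 * j - 1) 1 * zeta_nat (2 * j + 1))"
    by (rule odd_sum_reindex[OF ev])
  finally show "S a n 1 = P0 a n 1 + (\<Sum>j=2..a div 2. of_nat (j * (2 * j - 1)) * P a n (2 * j - 1) 1 * zeta_nat (2 * j + 1))" .
qed

end
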